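(* Let $v_1,\ldots,v_n$ ($n\ge2$) be an MA-ordering of a capacitated hypergraph $H$, and let $\beta=\min_{1<i\le n}d(V_{i-1},v_i)$. Then $\beta\le\lambda(H)\le n\beta$.
   Context: A hypergraph $H=(V,E)$ has finite vertex set $V$, a finite multiset $E$ of edges (subsets of $V$) and capacities $c:E\to\mathbb{R}_{\ge0}$. $c(S)$ is the total capacity of edges meeting both $S$ and $V\setminus S$, and $\lambda(H)=\min_{\emptyset\ne S\subsetneq V}c(S)$. For subsets $A_1,\ldots,A_k$, $d(A_1,\ldots,A_k)$ is the total capacity of edges meeting every $A_i$ (a vertex $v$ stands for $\{v\}$). $V_i=\{v_1,\ldots,v_i\}$; the ordering is an MA-ordering if $d(V_{i-1},v_i)\ge d(V_{i-1},v_j)$ for all $1\le i<j\le n$. *)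

theory Defs
  imports Complex_Main
begin

text \<open>A capacitated hypergraph is given by a finite vertex set V, a finite index set E of
edges (so that E behaves as a multiset: distinct indices may carry the same vertex set),
a map edge assigning to each index its vertex set, and capacities c.\<close>

definition hypergraph :: "'v set \<Rightarrow> 'e set \<Rightarrow> ('e \<Rightarrow> 'v set) \<Rightarrow> ('e \<Rightarrow> real) \<Rightarrow> bool" where
  "hypergraph V E edge c \<longleftrightarrow> finite V \<and> finite E \<and> (\<forall>e\<in>E. edge e \<subseteq> V) \<and> (\<forall>e\<in>E. c e \<ge> 0)"

definition cut_cap :: "'v set \<Rightarrow> 'e set \<Rightarrow> ('e \<Rightarrow> 'v set) \<Rightarrow> ('e \<Rightarrow> real) \<Rightarrow> 'v set \<Rightarrow> real" where
  "cut_cap V E edge c S = (\<Sum>e\<in>{e\<in>E. edge e \<inter> S \<noteq> {} \<and> edge e \<inter> (V - S) \<noteq> {}}. c e)"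

definition hg_lambda :: "'v set \<Rightarrow> 'e set \<Rightarrow> ('e \<Rightarrow> 'v set) \<Rightarrow> ('e \<Rightarrow> real) \<Rightarrow> real" where
  "hg_lambda V E edge c = Min {cut_cap V E edge c S | S. S \<noteq> {} \<and> S \<subset> V}"

definition dcap :: "'e set \<Rightarrow> ('e \<Rightarrow> 'v set) \<Rightarrow> ('e \<Rightarrow> real) \<Rightarrow> 'v set list \<Rightarrow> real" where
  "dcap E edge c As = (\<Sum>e\<in>{e\<in>E. \<forall>A\<in>set As. edge e \<inter> A \<noteq> {}}. c e)"

text \<open>Ordering v_1,...,v_n given as a list vs; v_i = vs ! (i-1), V_i = set (take i vs).\<close>
definition vtx :: "'v list \<Rightarrow> nat \<Rightarrow> 'v" where
  "vtx vs i = vs ! (i - 1)"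

definition pre :: "'v list \<Rightarrow> nat \<Rightarrow> 'v set" where
  "pre vs i = set (take i vs)"

definition ordering_of :: "'v set \<Rightarrow> 'v list \<Rightarrow> bool" where
  "ordering_of V vs \<longleftrightarrow> distinct vs \<and> set vs = V"

definition MA_ordering :: "'v set \<Rightarrow> 'e set \<Rightarrow> ('e \<Rightarrow> 'v set) \<Rightarrow> ('e \<Rightarrow> real) \<Rightarrow> 'v list \<Rightarrow> bool" where
  "MA_ordering V E edge c vs \<longleftrightarrow> ordering_of V vs \<and>
     (\<forall>i j. 1 \<le> i \<and> i < j \<and> j \<le> length vs \<longrightarrow>
        dcap E edge c [pre vs (i - 1), {vtx vs i}] \<ge> dcap E edge c [pre vs (i - 1), {vtx vs j}])"

end

theory Submission
  imports Defs
begin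

lemma sum_UN_le_aux:
  fixes f :: "'a \<Rightarrow> real"
  assumes "finite I" "\<And>i. i \<in> I \<Longrightarrow> finite (A i)" "\<And>x. f x \<ge> 0"
  shows "sum f (\<Union>i\<in>I. A i) \<le> (\<Sum>i\<in>I. sum f (A i))"
  using assms
proof (induction I rule: finite_induct)
  case empty
  then show ?case by simp
next
  case (insert x F)
  have fin: "finite (\<Union>i\<in>F. A i)" using insert by auto
  have "sum f (\<Union>i\<in>insert x F. A i) = sum f (A x \<union> (\<Union>i\<in>F. A i))" by simp
  also have "\<dots> = sum f (A x) + sum f (\<Union>i\<in>F. A i) - sum f (A x \<inter> (\<Union>i\<in>F. A i))"
    using sum_Un[OF insert.prems(1)[of x] fin] by simp
  also have "\<dots> \<le> sum f (A x) + sum f (\<Union>i\<in>F. A i)"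
    using sum_nonneg[of "A x \<inter> (\<Union>i\<in>F. A i)" f] insert.prems(2) by auto
  also have "\<dots> \<le> sum f (A x) + (\<Sum>i\<in>F. sum f (A i))"
    using insert by auto
  finally show ?case using insert by simp
qed

theorem mainTheorem20:
  fixes V :: "'v set" and E :: "'e set" and edge :: "'e \<Rightarrow> 'v set" and c :: "'e \<Rightarrow> real"
    and vs :: "'v list" and \<beta> :: real
  assumes "hypergraph V E edge c"
    and "length vs \<ge> 2"
    and "MA_ordering V E edge c vs"
    and "\<beta> = Min {dcap E edge c [pre vs (i - 1), {vtx vs i}] | i. 1 < i \<and> i \<le> length vs}"
  shows "\<beta> \<le> hg_lambda V E edge c \<and> hg_lambda V E edge c \<le> real (length vs) * \<beta>"
proof -
  define n where "n = length vs"
  have finV: "finite V" and finE: "finite E" and sub: "\<And>e. e \<in> E \<Longrightarrow> edge e \<subseteq> V"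
    and cnn: "\<And>e. e \<in> E \<Longrightarrow> c e \<ge> 0"
    using assms(1) unfolding hypergraph_def by auto
  have dist: "distinct vs" and setvs: "set vs = V"
    using assms(3) unfolding MA_ordering_def ordering_of_def by auto
  have MA: "\<And>i j. 1 \<le> i \<Longrightarrow> i < j \<Longrightarrow> j \<le> n \<Longrightarrow>
        dcap E edge c [pre vs (i - 1), {vtx vs j}] \<le> dcap E edge c [pre vs (i - 1), {vtx vs i}]"
    using assms(3) unfolding MA_ordering_def n_def by auto
  define B where "B = {dcap E edge c [pre vs (i - 1), {vtx vs i}] | i. 1 < i \<and> i \<le> length vs}"
  have Bfin: "finite B"
  proof -
    have "B = (\<lambda>i. dcap E edge c [pre vs (i - 1), {vtx vs i}]) ` {i. 1 < i \<and> i \<le> length vs}"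
      unfolding B_def by auto
    then show ?thesis by simp
  qed
  have Bne: "B \<noteq> {}" unfolding B_def using assms(2) by auto
  have betaB: "\<And>i. 1 < i \<Longrightarrow> i \<le> n \<Longrightarrow> \<beta> \<le> dcap E edge c [pre vs (i - 1), {vtx vs i}]"
    unfolding assms(4) n_def by (rule Min_le, fold B_def, rule Bfin, auto simp: B_def)
  have dnn: "\<And>As. dcap E edge c As \<ge> 0"
    unfolding dcap_def by (rule sum_nonneg) (auto intro: cnn)
  define L where "L = {cut_cap V E edge c S | S. S \<noteq> {} \<and> S \<subset> V}"
  have Lfin: "finite L"
  proof -
    have "L \<subseteq> cut_cap V E edge c ` Pow V" unfolding L_def by auto
    then show ?thesis using finV finite_subset by blast
  qed
  have lam: "hg_lambda V E edge c = Min L" unfolding hg_lambda_def L_def by simp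
  have low: "\<beta> \<le> cut_cap V E edge c S" if S: "S \<noteq> {}" "S \<subset> V" for S
  proof -
    define P where "P k = ((vs ! k \<in> S) \<noteq> (vs ! 0 \<in> S))" for k
    obtain x y where x: "x \<in> S" and y: "y \<in> V" "y \<notin> S" using S by blast
    have "x \<in> V" using x S by blast
    obtain kx where kx: "kx < n" "vs ! kx = x" using \<open>x \<in> V\<close> setvs unfolding n_def
      by (metis in_set_conv_nth)
    obtain ky where ky: "ky < n" "vs ! ky = y" using y setvs unfolding n_def
      by (metis in_set_conv_nth)
    have "\<exists>k. k < n \<and> P k" unfolding P_def using kx ky x y by blast
    define k where "k = (LEAST k. k < n \<and> P k)"
    have k: "k < n" "P k" using LeastI_ex[OF \<open>\<exists>k. k < n \<and> P k\<close>] unfolding k_def by auto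
    have kmin: "\<And>m. m < k \<Longrightarrow> \<not> P m"
      using k not_less_Least unfolding k_def by (metis less_trans)
    have k0: "k \<ge> 1" using k(2) unfolding P_def by (cases k) auto
    have eq1: "pre vs (Suc k - 1) = set (take k vs)" unfolding pre_def by simp
    have eq2: "vtx vs (Suc k) = vs ! k" unfolding vtx_def by simp
    have "\<beta> \<le> dcap E edge c [pre vs (Suc k - 1), {vtx vs (Suc k)}]"
      using betaB[of "Suc k"] k k0 by simp
    also have "\<dots> \<le> cut_cap V E edge c S"
      unfolding dcap_def cut_cap_def eq1 eq2
    proof (rule sum_mono2)
      show "finite {e \<in> E. edge e \<inter> S \<noteq> {} \<and> edge e \<inter> (V - S) \<noteq> {}}" using finE by simp
      show "\<And>b. b \<in> {e \<in> E. edge e \<inter> S \<noteq> {} \<and> edge e \<inter> (V - S) \<noteq> {}} -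
         {e \<in> E. \<forall>A\<in>set [set (take k vs), {vs ! k}]. edge e \<inter> A \<noteq> {}} \<Longrightarrow> 0 \<le> c b"
        using cnn by auto
      show "{e \<in> E. \<forall>A\<in>set [set (take k vs), {vs ! k}]. edge e \<inter> A \<noteq> {}}
          \<subseteq> {e \<in> E. edge e \<inter> S \<noteq> {} \<and> edge e \<inter> (V - S) \<noteq> {}}"
      proof
        fix e assume e: "e \<in> {e \<in> E. \<forall>A\<in>set [set (take k vs), {vs ! k}]. edge e \<inter> A \<noteq> {}}"
        then have eE: "e \<in> E" and a: "edge e \<inter> set (take k vs) \<noteq> {}" and b: "vs ! k \<in> edge e"
          by auto
        obtain z where z: "z \<in> edge e" "z \<in> set (take k vs)" using a by blast
        obtain m where m: "m < k" "vs ! m = z" using z(2) k(1) unfolding n_def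
          by (auto simp: in_set_conv_nth)
        have zV: "z \<in> V" using z eE sub by blast
        have kV: "vs ! k \<in> V" using k(1) setvs unfolding n_def by auto
        have "(z \<in> S) \<noteq> (vs ! k \<in> S)" using kmin[OF m(1)] k(2) m(2) unfolding P_def by auto
        then show "e \<in> {e \<in> E. edge e \<inter> S \<noteq> {} \<and> edge e \<inter> (V - S) \<noteq> {}}"
          using eE z(1) b zV kV by auto
      qed
    qed
    finally show ?thesis .
  qed
  have part1: "\<beta> \<le> hg_lambda V E edge c"
    unfolding lam
  proof (rule Min.boundedI[OF Lfin])
    have "{vs ! 0} \<noteq> {} \<and> {vs ! 0} \<subset> V"
    proof -
      have l0: "0 < length vs" "1 < length vs" using assms(2) by auto
      have "vs ! 0 \<in> V" "vs ! 1 \<in> V" using nth_mem[OF l0(1)] nth_mem[OF l0(2)] setvs by auto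
      moreover have "vs ! 0 \<noteq> vs ! 1" using nth_eq_iff_index_eq[OF dist l0] by simp
      ultimately show ?thesis by auto
    qed
    then show "L \<noteq> {}" unfolding L_def by blast
    show "\<And>a. a \<in> L \<Longrightarrow> \<beta> \<le> a" unfolding L_def using low by blast
  qed
  have "\<beta> \<in> B" unfolding assms(4) B_def[symmetric] using Bfin Bne by (rule Min_in)
  then obtain i where i: "1 < i" "i \<le> n" "\<beta> = dcap E edge c [pre vs (i - 1), {vtx vs i}]"
    unfolding B_def n_def by auto
  define S where "S = pre vs (i - 1)"
  have Sset: "S = set (take (i - 1) vs)" unfolding S_def pre_def by simp
  have SV: "S \<subseteq> V" using Sset setvs by (auto dest: in_set_takeD)
  have vi: "vs ! (i - 1) \<in> V" using i setvs unfolding n_def by auto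
  have il: "i - 1 < length vs" using i unfolding n_def by simp
  have viS: "vs ! (i - 1) \<notin> S"
  proof
    assume "vs ! (i - 1) \<in> S"
    then obtain m where m: "m < length (take (i - 1) vs)" "take (i - 1) vs ! m = vs ! (i - 1)"
      unfolding Sset by (auto simp: in_set_conv_nth)
    then have "m < i - 1" "vs ! m = vs ! (i - 1)" by auto
    moreover have "m < length vs" using \<open>m < i - 1\<close> il by simp
    ultimately show False using nth_eq_iff_index_eq[OF dist _ il] by auto
  qed
  have Sne: "S \<noteq> {}"
  proof -
    have "take (i - 1) vs \<noteq> []" using i il by (cases vs) (auto simp: take_eq_Nil)
    then show ?thesis unfolding Sset by auto
  qed
  have "hg_lambda V E edge c \<le> cut_cap V E edge c S"
    unfolding lam using Lfin by (rule Min_le) (use Sne SV vi viS L_def in auto)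
  also have "cut_cap V E edge c S \<le> (\<Sum>j\<in>{i..n}. dcap E edge c [S, {vtx vs j}])"
  proof -
    define A where "A j = {e\<in>E. \<forall>A\<in>set [S, {vtx vs j}]. edge e \<inter> A \<noteq> {}}" for j
    have "{e \<in> E. edge e \<inter> S \<noteq> {} \<and> edge e \<inter> (V - S) \<noteq> {}} \<subseteq> (\<Union>j\<in>{i..n}. A j)"
    proof
      fix e assume e: "e \<in> {e \<in> E. edge e \<inter> S \<noteq> {} \<and> edge e \<inter> (V - S) \<noteq> {}}"
      then obtain w where w: "w \<in> edge e" "w \<in> V" "w \<notin> S" by auto
      obtain m where m: "m < n" "vs ! m = w" using w(2) setvs unfolding n_def
        by (metis in_set_conv_nth)
      have "\<not> m < i - 1" using w(3) m unfolding Sset n_def by (auto simp: in_set_conv_nth)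
      then have "Suc m \<in> {i..n}" "vtx vs (Suc m) = w" using m i unfolding vtx_def by auto
      then show "e \<in> (\<Union>j\<in>{i..n}. A j)" using e w unfolding A_def by auto
    qed
    then have "cut_cap V E edge c S \<le> sum c (\<Union>j\<in>{i..n}. A j)"
      unfolding cut_cap_def
      by (intro sum_mono2) (use finE cnn A_def in auto)
    also have "\<dots> \<le> (\<Sum>j\<in>{i..n}. sum c (A j))"
    proof -
      define c' where "c' e = (if e \<in> E then c e else 0)" for e
      have "sum c (\<Union>j\<in>{i..n}. A j) = sum c' (\<Union>j\<in>{i..n}. A j)"
        by (rule sum.cong) (auto simp: c'_def A_def)
      also have "\<dots> \<le> (\<Sum>j\<in>{i..n}. sum c' (A j))"
        by (rule sum_UN_le_aux) (auto simp: c'_def A_def finE cnn)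
      also have "\<dots> = (\<Sum>j\<in>{i..n}. sum c (A j))"
        by (intro sum.cong refl) (auto simp: c'_def A_def)
      finally show ?thesis .
    qed
    finally show ?thesis unfolding dcap_def A_def .
  qed
  also have "\<dots> \<le> (\<Sum>j\<in>{i..n}. \<beta>)"
  proof (rule sum_mono)
    fix j assume j: "j \<in> {i..n}"
    show "dcap E edge c [S, {vtx vs j}] \<le> \<beta>"
    proof (cases "j = i")
      case True then show ?thesis using i S_def by simp
    next
      case False then show ?thesis using MA[of i j] i j S_def by auto
    qed
  qed
  also have "\<dots> = real (card {i..n}) * \<beta>" by simp
  also have "\<dots> \<le> real n * \<beta>"
    using i dnn by (intro mult_right_mono) auto
  finally show ?thesis using part1 unfolding n_def by simp
qed

end
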